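(* Let $l_0\ge1$ be an integer and consider the string $\mathbf s=``G_{\mu\mu}G^{(\mu)}_{\nu\nu}S_{\mu\nu}"$. Let $w=a_1a_2\cdots a_{4l_0}$ be any binary sequence of length $4l_0$ such that $\mathbf s_w\ne\emptyset$. Then either $\mathcal F_{\rm off}(\mathbf s_w)\ge2l_0$, or $\mathbf s_w$ is maximally expanded.
   Context: Fix two distinct symbols (indices) $\mu,\nu$. A string is a finite concatenation of symbols from the alphabet $\mathfrak A=\{G_{\alpha\beta},\,G_{\alpha\alpha}^{-1},\,S_{\alpha\beta}:\alpha,\beta\in\{\mu,\nu\}\}\cup\{G^{(\nu)}_{\mu\mu},G^{(\mu)}_{\nu\nu},(G^{(\nu)}_{\mu\mu})^{-1},(G^{(\mu)}_{\nu\nu})^{-1}\}$; $\emptyset$ denotes the empty string (strings may carry a sign $\pm$, which is irrelevant here). The maximally expanded symbols are $\mathfrak A_{\max}=\{G_{\mu\nu},G_{\nu\mu},G^{(\nu)}_{\mu\mu},G^{(\mu)}_{\nu\nu},(G^{(\nu)}_{\mu\mu})^{-1},(G^{(\mu)}_{\nu\nu})^{-1},S_{\mu\mu},S_{\nu\nu},S_{\mu\nu},S_{\nu\mu}\}$; a string is maximally expanded if all its symbols lie in $\mathfrak A_{\max}$. The off-diagonal symbols are $G_{\mu\nu},G_{\nu\mu},S_{\mu\nu},S_{\nu\mu}$; $\mathcal F_{\rm off}(\mathbf s)$ is the number of off-diagonal symbols in $\mathbf s$ (counted with multiplicity). String operators, with $\alpha\ne\beta\in\{\mu,\nu\}$: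 (i) $\tau_0$: find the first occurrence in $\mathbf s$ of a symbol $G_{\alpha\alpha}$ or $G_{\alpha\alpha}^{-1}$ (for some $\alpha\in\{\mu,\nu\}$; these are the symbols without superscript); replace $G_{\alpha\alpha}$ by $G^{(\beta)}_{\alpha\alpha}$, resp. $G_{\alpha\alpha}^{-1}$ by $(G^{(\beta)}_{\alpha\alpha})^{-1}$; if none is found, $\tau_0(\mathbf s)=\mathbf s$. (ii) $\tau_1$: find the same first occurrence; replace $G_{\alpha\alpha}$ by $G_{\alpha\beta}G_{\beta\alpha}G_{\beta\beta}^{-1}$, resp. $G_{\alpha\alpha}^{-1}$ by $-G_{\alpha\beta}G_{\beta\alpha}G_{\alpha\alpha}^{-1}(G^{(\beta)}_{\alpha\alpha})^{-1}G_{\beta\beta}^{-1}$; if none is found, $\tau_1(\mathbf s)=\emptyset$. (iii) $\rho$ replaces each symbol $G_{\alpha\beta}$ ($\alpha\ne\beta$) in $\mathbf s$ by $G_{\alpha\alpha}G^{(\alpha)}_{\beta\beta}S_{\alpha\beta}$. All operators map $\emptyset$ to $\emptyset$. For a binary sequence $w=a_1\cdots a_m$, $\mathbf s_w:=\rho^{a_m}\tau_{a_m}\cdots\rho^{a_1}\tau_{a_1}(\mathbf s)$, where $\rho^0$ is the identity and $\rho^1=\rho$. *)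

theory Defs
  imports Main
begin

datatype idx = Mu | Nu

fun other :: "idx \<Rightarrow> idx" where
  "other Mu = Nu" | "other Nu = Mu"

text \<open>Alphabet symbols.
  G a b     : G_{ab}   (any a b)
  Ginv a    : (G_{aa})^{-1}
  S a b     : S_{ab}
  Gsup a    : G^{(other a)}_{aa}
  Gsupinv a : (G^{(other a)}_{aa})^{-1}\<close>
datatype sym = G idx idx | Ginv idx | S idx idx | Gsup idx | Gsupinv idx

text \<open>Strings (signs ignored); the empty list is the empty string.\<close>
type_synonym str = "sym list"

fun tau0 :: "str \<Rightarrow> str" where
  "tau0 [] = []"
| "tau0 (x # xs) = (case x of
      G a b \<Rightarrow> (if a = b then Gsup a # xs else x # tau0 xs)
    | Ginv a \<Rightarrow> Gsupinv a # xs
    | _ \<Rightarrow> x # tau0 xs)"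

fun tau1_aux :: "str \<Rightarrow> str option" where
  "tau1_aux [] = None"
| "tau1_aux (x # xs) = (case x of
      G a b \<Rightarrow> (if a = b
                  then Some ([G a (other a), G (other a) a, Ginv (other a)] @ xs)
                  else map_option (Cons x) (tau1_aux xs))
    | Ginv a \<Rightarrow> Some ([G a (other a), G (other a) a, Ginv a, Gsupinv a, Ginv (other a)] @ xs)
    | _ \<Rightarrow> map_option (Cons x) (tau1_aux xs))"

definition tau1 :: "str \<Rightarrow> str" where
  "tau1 s = (case tau1_aux s of None \<Rightarrow> [] | Some t \<Rightarrow> t)"

fun rho_sym :: "sym \<Rightarrow> str" where
  "rho_sym (G a b) = (if a \<noteq> b then [G a a, Gsup b, S a b] else [G a b])"
| "rho_sym x = [x]"

definition rho :: "str \<Rightarrow> str" where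
  "rho s = concat (map rho_sym s)"

definition step :: "bool \<Rightarrow> str \<Rightarrow> str" where
  "step a s = (if a then rho (tau1 s) else tau0 s)"

text \<open>s_w for w = a_1 ... a_m (list [a_1,...,a_m]); a_1 applied first.\<close>
definition sw :: "str \<Rightarrow> bool list \<Rightarrow> str" where
  "sw s w = fold step w s"

fun max_sym :: "sym \<Rightarrow> bool" where
  "max_sym (G a b) = (a \<noteq> b)"
| "max_sym (Ginv a) = False"
| "max_sym (S a b) = True"
| "max_sym (Gsup a) = True"
| "max_sym (Gsupinv a) = True"

definition max_expanded :: "str \<Rightarrow> bool" where
  "max_expanded s = (\<forall>x \<in> set s. max_sym x)"

fun off_sym :: "sym \<Rightarrow> bool" where
  "off_sym (G a b) = (a \<noteq> b)"
| "off_sym (S a b) = (a \<noteq> b)"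
| "off_sym _ = False"

definition F_off :: "str \<Rightarrow> nat" where
  "F_off s = length (filter off_sym s)"

end

theory Submission
  imports Defs
begin

fun offG :: "sym \<Rightarrow> bool" where
  "offG (G a b) = (a \<noteq> b)"
| "offG _ = False"

definition NM :: "str \<Rightarrow> nat" where
  "NM s = length (filter (\<lambda>x. \<not> max_sym x) s)"

definition OG :: "str \<Rightarrow> nat" where
  "OG s = length (filter offG s)"

lemma other_ne [simp]: "other a \<noteq> a" "a \<noteq> other a"
  by (cases a; simp)+

lemma tau1_aux_props:
  "tau1_aux s = Some t \<Longrightarrow> NM t \<le> NM s + 1 \<and> F_off t = F_off s + 2 \<and> OG t = OG s + 2 \<and> NM s \<ge> 1"
proof (induction s arbitrary: t)
  case Nil then show ?case by simp
next
  case (Cons x xs)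
  show ?case
  proof (cases x)
    case (G a b)
    then show ?thesis using Cons
      by (cases "a = b") (auto simp: NM_def F_off_def OG_def)
  next
    case (Ginv a)
    then show ?thesis using Cons by (auto simp: NM_def F_off_def OG_def)
  qed (use Cons in \<open>auto simp: NM_def F_off_def OG_def\<close>)
qed

lemma tau1_props:
  "tau1 s \<noteq> [] \<Longrightarrow> NM (tau1 s) \<le> NM s + 1 \<and> F_off (tau1 s) = F_off s + 2 \<and> OG (tau1 s) = OG s + 2 \<and> NM s \<ge> 1"
  unfolding tau1_def using tau1_aux_props by (auto split: option.splits)

lemma tau0_props:
  "NM (tau0 s) = NM s - 1 \<and> F_off (tau0 s) = F_off s \<and> OG (tau0 s) = OG s"
proof (induction s)
  case Nil then show ?case by (simp add: NM_def)
next
  case (Cons x xs)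
  show ?case
  proof (cases x)
    case (G a b)
    then show ?thesis using Cons
      by (cases "a = b") (auto simp: NM_def F_off_def OG_def)
  qed (use Cons in \<open>auto simp: NM_def F_off_def OG_def\<close>)
qed

lemma rho_props:
  "NM (rho s) = NM s + OG s \<and> F_off (rho s) = F_off s \<and> OG (rho s) = 0 \<and> (rho s = [] \<longleftrightarrow> s = [])"
proof (induction s)
  case Nil then show ?case by (simp add: rho_def NM_def F_off_def OG_def)
next
  case (Cons x xs)
  show ?case
  proof (cases x)
    case (G a b)
    then show ?thesis using Cons
      by (cases "a = b") (auto simp: rho_def NM_def F_off_def OG_def)
  qed (use Cons in \<open>auto simp: rho_def NM_def F_off_def OG_def\<close>)
qed

lemma sw_Nil: "sw [] w = []"
proof (induction w)
  case Nil then show ?case by (simp add: sw_def)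
next
  case (Cons a w)
  have "step a [] = []" by (simp add: step_def tau1_def rho_def)
  then show ?case using Cons by (simp add: sw_def)
qed

lemma main:
  "OG s = 0 \<Longrightarrow> sw s w \<noteq> [] \<Longrightarrow>
   F_off (sw s w) = F_off s + 2 * length (filter (\<lambda>b. b) w) \<and>
   (NM (sw s w) = 0 \<or> (NM (sw s w) + length (filter Not w) \<le> NM s + 3 * length (filter (\<lambda>b. b) w) \<and> NM s \<ge> 1))"
proof (induction w arbitrary: s)
  case Nil then show ?case by (auto simp: sw_def)
next
  case (Cons a w)
  have sw: "sw s (a # w) = sw (step a s) w" by (simp add: sw_def)
  have ne: "step a s \<noteq> []" using Cons.prems sw sw_Nil by metis
  show ?case
  proof (cases a)
    case True
    then have st: "step a s = rho (tau1 s)" by (simp add: step_def)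
    have t: "tau1 s \<noteq> []" using ne st rho_props by auto
    note T = tau1_props[OF t]
    have R: "NM (step a s) = NM (tau1 s) + OG (tau1 s)" "F_off (step a s) = F_off (tau1 s)"
      "OG (step a s) = 0" using st rho_props by auto
    have IH: "F_off (sw (step a s) w) = F_off (step a s) + 2 * length (filter (\<lambda>b. b) w) \<and>
   (NM (sw (step a s) w) = 0 \<or> (NM (sw (step a s) w) + length (filter Not w) \<le> NM (step a s) + 3 * length (filter (\<lambda>b. b) w)))"
      using Cons.IH[OF R(3)] Cons.prems sw by auto
    show ?thesis using IH R T Cons.prems(1) True sw by auto
  next
    case False
    then have st: "step a s = tau0 s" by (simp add: step_def)
    note T = tau0_props[of s]
    have IH: "F_off (sw (step a s) w) = F_off (step a s) + 2 * length (filter (\<lambda>b. b) w) \<and>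
   (NM (sw (step a s) w) = 0 \<or> (NM (sw (step a s) w) + length (filter Not w) \<le> NM (step a s) + 3 * length (filter (\<lambda>b. b) w) \<and> NM (step a s) \<ge> 1))"
      using Cons.IH[of "step a s"] Cons.prems sw st T by auto
    show ?thesis using IH T st False sw by auto
  qed
qed

lemma NM0: "NM s = 0 \<Longrightarrow> max_expanded s"
  by (auto simp: NM_def max_expanded_def filter_empty_conv)

theorem lemma4p8:
  fixes l0 :: nat and w :: "bool list"
  assumes "l0 \<ge> 1"
    and "length w = 4 * l0"
    and "sw [G Mu Mu, Gsup Nu, S Mu Nu] w \<noteq> []"
  shows "F_off (sw [G Mu Mu, Gsup Nu, S Mu Nu] w) \<ge> 2 * l0
         \<or> max_expanded (sw [G Mu Mu, Gsup Nu, S Mu Nu] w)"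
proof -
  let ?s = "[G Mu Mu, Gsup Nu, S Mu Nu]"
  have M: "F_off (sw ?s w) = 1 + 2 * length (filter (\<lambda>b. b) w) \<and>
   (NM (sw ?s w) = 0 \<or> NM (sw ?s w) + length (filter Not w) \<le> 1 + 3 * length (filter (\<lambda>b. b) w))"
    using main[of ?s w] assms(3) by (simp add: OG_def NM_def F_off_def)
  have L: "length (filter (\<lambda>b. b) w) + length (filter Not w) = 4 * l0"
    using assms(2) sum_length_filter_compl[of "\<lambda>b. b" w] by (simp add: comp_def)
  show ?thesis using M L NM0 by auto
qed

end
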